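(* Let $G$ be a group which is an internal semidirect product $G = HK$, where $H$ is a normal subgroup of $G$, $K$ is a subgroup of $G$ with $H\cap K=1$. Let $\hat{\mathcal{M}}_K$ be the set of all formal matrices $\begin{pmatrix}\alpha & 0\\ \gamma & \delta\end{pmatrix}$ with $\alpha\in \mathrm{Map}(H,H)$, $\gamma\in \mathrm{Hom}(H,K)$, $\delta\in \mathrm{Aut}(K)$ satisfying: (C1) $\alpha(hh') = \alpha(h)\,\alpha(h')^{\gamma(h)}$ for all $h,h'\in H$; (C2) $\gamma(h^{k}) = \gamma(h)^{\delta(k)}$ for all $h\in H$, $k\in K$; (C3) $\alpha(h^{k}) = \alpha(h)^{\delta(k)}$ for all $h\in H$, $k\in K$; (C4) for every $h'k'\in G$ ($h'\in H$, $k'\in K$) there is a unique $hk\in G$ ($h\in H,k\in K$) with $\alpha(h)=h'$ and $\gamma(h)\delta(k)=k'$. Equip $\hat{\mathcal{M}}_K$ with the multiplication $\begin{pmatrix}\alpha & 0\\ \gamma & \delta\end{pmatrix}\begin{pmatrix}\alpha' & 0\\ \gamma' & \delta'\end{pmatrix}=\begin{pmatrix}\alpha\alpha' & 0\\ \gamma\alpha'+\delta\gamma' & \delta\delta'\end{pmatrix}$, where $\alpha\alpha'$, $\delta\delta'$ are compositions and $(\gamma\alpha'+\delta\gamma')(h)=\gamma(\alpha'(h))\,\delta(\gamma'(h))$. Then $\hat{\mathcal{M}}_K$ is a group and the group $\mathrm{Aut}_K(G)$ is isomorphic to $\hat{\mathcal{M}}_K$ (via $\theta\mapsto \begin{pmatrix}\alpha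 & 0\\ \gamma & \delta\end{pmatrix}$ where $\theta(h)=\alpha(h)\gamma(h)$ for $h\in H$ and $\delta=\theta|_K$).
   Context: For a group $G$ and $x,y\in G$, $x^{y}$ denotes the conjugate $yxy^{-1}$. For a subgroup $K$ of $G$, $\mathrm{Aut}_K(G)=\{\theta\in\mathrm{Aut}(G)\mid \theta(K)=K\}$. $\mathrm{Map}(H,H)$ denotes the set of all maps $H\to H$. *)

theory Defs
  imports "HOL-Algebra.Algebra"
begin

(* conjugation x^y = y x y^{-1} *)
definition conjg :: "('a, 'b) monoid_scheme \<Rightarrow> 'a \<Rightarrow> 'a \<Rightarrow> 'a"
  where "conjg G x y = y \<otimes>\<^bsub>G\<^esub> x \<otimes>\<^bsub>G\<^esub> inv\<^bsub>G\<^esub> y"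

type_synonym 'a fmat = "('a \<Rightarrow> 'a) \<times> ('a \<Rightarrow> 'a) \<times> ('a \<Rightarrow> 'a)"

(* Formal matrices (alpha, gamma, delta), maps represented extensionally on H resp. K *)
definition MK :: "('a, 'b) monoid_scheme \<Rightarrow> 'a set \<Rightarrow> 'a set \<Rightarrow> 'a fmat set" where
  "MK G H K = {(\<alpha>, \<gamma>, \<delta>).
     \<alpha> \<in> H \<rightarrow>\<^sub>E H \<and>
     \<gamma> \<in> hom (G\<lparr>carrier := H\<rparr>) (G\<lparr>carrier := K\<rparr>) \<and> \<gamma> \<in> extensional H \<and>
     \<delta> \<in> auto (G\<lparr>carrier := K\<rparr>) \<and>
     (\<forall>h\<in>H. \<forall>h'\<in>H. \<alpha> (h \<otimes>\<^bsub>G\<^esub> h') = \<alpha> h \<otimes>\<^bsub>G\<^esub> conjg G (\<alpha> h') (\<gamma> h)) \<and>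
     (\<forall>h\<in>H. \<forall>k\<in>K. \<gamma> (conjg G h k) = conjg G (\<gamma> h) (\<delta> k)) \<and>
     (\<forall>h\<in>H. \<forall>k\<in>K. \<alpha> (conjg G h k) = conjg G (\<alpha> h) (\<delta> k)) \<and>
     (\<forall>h'\<in>H. \<forall>k'\<in>K. \<exists>!p. p \<in> H \<times> K \<and> \<alpha> (fst p) = h' \<and>
                                  \<gamma> (fst p) \<otimes>\<^bsub>G\<^esub> \<delta> (snd p) = k')}"

definition MK_mult :: "('a, 'b) monoid_scheme \<Rightarrow> 'a set \<Rightarrow> 'a set \<Rightarrow> 'a fmat \<Rightarrow> 'a fmat \<Rightarrow> 'a fmat" where
  "MK_mult G H K P Q =
     (compose H (fst P) (fst Q),
      (\<lambda>h\<in>H. monoid.mult G (fst (snd P) (fst Q h)) (snd (snd P) (fst (snd Q) h))),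
      compose K (snd (snd P)) (snd (snd Q)))"

definition MK_one :: "('a, 'b) monoid_scheme \<Rightarrow> 'a set \<Rightarrow> 'a set \<Rightarrow> 'a fmat" where
  "MK_one G H K = ((\<lambda>h\<in>H. h), (\<lambda>h\<in>H. \<one>\<^bsub>G\<^esub>), (\<lambda>k\<in>K. k))"

definition MK_group :: "('a, 'b) monoid_scheme \<Rightarrow> 'a set \<Rightarrow> 'a set \<Rightarrow> 'a fmat monoid" where
  "MK_group G H K = \<lparr>carrier = MK G H K, monoid.mult = MK_mult G H K, one = MK_one G H K\<rparr>"

definition AutK_group :: "('a, 'b) monoid_scheme \<Rightarrow> 'a set \<Rightarrow> ('a \<Rightarrow> 'a) monoid" where
  "AutK_group G K = (AutoGroup G)\<lparr>carrier := {\<theta> \<in> auto G. \<theta> ` K = K}\<rparr>"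

end

theory Submission
  imports Defs
begin

lemma group_transfer:
  fixes A :: "('c,'d) monoid_scheme" and M :: "('e,'f) monoid_scheme"
  assumes "group A" "\<Phi> \<in> hom A M" "\<Phi> ` carrier A = carrier M" "\<Phi> \<one>\<^bsub>A\<^esub> = \<one>\<^bsub>M\<^esub>"
  shows "group M"
proof -
  interpret A: group A by fact
  have hm: "\<And>x y. x \<in> carrier A \<Longrightarrow> y \<in> carrier A \<Longrightarrow> \<Phi> (x \<otimes>\<^bsub>A\<^esub> y) = \<Phi> x \<otimes>\<^bsub>M\<^esub> \<Phi> y"
    using assms(2) by (simp add: hom_def)
  have im: "\<And>a. a \<in> carrier A \<Longrightarrow> \<Phi> a \<in> carrier M" using assms(3) by blast
  show ?thesis
  proof (rule groupI)
    fix x y assume "x \<in> carrier M" "y \<in> carrier M"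
    then have "x \<in> \<Phi> ` carrier A" "y \<in> \<Phi> ` carrier A" using assms(3) by simp_all
    then obtain a b where ab: "a \<in> carrier A" "b \<in> carrier A" "x = \<Phi> a" "y = \<Phi> b" by blast
    then have "x \<otimes>\<^bsub>M\<^esub> y = \<Phi> (a \<otimes>\<^bsub>A\<^esub> b)" using hm by simp
    then show "x \<otimes>\<^bsub>M\<^esub> y \<in> carrier M" using im ab by simp
  next
    show "\<one>\<^bsub>M\<^esub> \<in> carrier M" using im[of "\<one>\<^bsub>A\<^esub>"] assms(4) by simp
  next
    fix x y z assume "x \<in> carrier M" "y \<in> carrier M" "z \<in> carrier M"
    then have "x \<in> \<Phi> ` carrier A" "y \<in> \<Phi> ` carrier A" "z \<in> \<Phi> ` carrier A" using assms(3) by simp_all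
    then obtain a b c where abc: "a \<in> carrier A" "b \<in> carrier A" "c \<in> carrier A" "x = \<Phi> a" "y = \<Phi> b" "z = \<Phi> c" by blast
    have "x \<otimes>\<^bsub>M\<^esub> y \<otimes>\<^bsub>M\<^esub> z = \<Phi> (a \<otimes>\<^bsub>A\<^esub> b \<otimes>\<^bsub>A\<^esub> c)" using abc hm by simp
    also have "\<dots> = \<Phi> (a \<otimes>\<^bsub>A\<^esub> (b \<otimes>\<^bsub>A\<^esub> c))" using abc A.m_assoc by simp
    also have "\<dots> = x \<otimes>\<^bsub>M\<^esub> (y \<otimes>\<^bsub>M\<^esub> z)" using abc hm by simp
    finally show "x \<otimes>\<^bsub>M\<^esub> y \<otimes>\<^bsub>M\<^esub> z = x \<otimes>\<^bsub>M\<^esub> (y \<otimes>\<^bsub>M\<^esub> z)" .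
  next
    fix x assume "x \<in> carrier M"
    then have "x \<in> \<Phi> ` carrier A" using assms(3) by simp
    then obtain a where a: "a \<in> carrier A" "x = \<Phi> a" by blast
    have "\<one>\<^bsub>M\<^esub> \<otimes>\<^bsub>M\<^esub> x = \<Phi> (\<one>\<^bsub>A\<^esub> \<otimes>\<^bsub>A\<^esub> a)" using a hm[of "\<one>\<^bsub>A\<^esub>" a] assms(4) by simp
    then show "\<one>\<^bsub>M\<^esub> \<otimes>\<^bsub>M\<^esub> x = x" using a by simp
  next
    fix x assume "x \<in> carrier M"
    then have "x \<in> \<Phi> ` carrier A" using assms(3) by simp
    then obtain a where a: "a \<in> carrier A" "x = \<Phi> a" by blast
    have "\<Phi> (inv\<^bsub>A\<^esub> a) \<otimes>\<^bsub>M\<^esub> x = \<Phi> (inv\<^bsub>A\<^esub> a \<otimes>\<^bsub>A\<^esub> a)" using a hm[of "inv\<^bsub>A\<^esub> a" a] by simp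
    also have "\<dots> = \<one>\<^bsub>M\<^esub>" using a assms(4) by simp
    finally show "\<exists>y\<in>carrier M. y \<otimes>\<^bsub>M\<^esub> x = \<one>\<^bsub>M\<^esub>" using im a by blast
  qed
qed

lemma AutK_group_is_group:
  assumes "group G" "subgroup K G"
  shows "group (AutK_group G K)"
proof -
  interpret G: group G by fact
  interpret AG: group "AutoGroup G" by (rule G.AutoGroup)
  have cA: "carrier (AutoGroup G) = auto G" by (simp add: AutoGroup_def)
  have mA: "\<And>a b. a \<in> auto G \<Longrightarrow> b \<in> auto G \<Longrightarrow> a \<otimes>\<^bsub>AutoGroup G\<^esub> b = compose (carrier G) a b"
    by (simp add: AutoGroup_def BijGroup_def auto_def)
  have oA: "\<one>\<^bsub>AutoGroup G\<^esub> = (\<lambda>x\<in>carrier G. x)" by (simp add: AutoGroup_def BijGroup_def)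
  have KG: "K \<subseteq> carrier G" using assms(2) subgroup.subset by blast
  have sub: "subgroup {\<theta> \<in> auto G. \<theta> ` K = K} (AutoGroup G)"
  proof (rule AG.subgroupI)
    show "{\<theta> \<in> auto G. \<theta> ` K = K} \<subseteq> carrier (AutoGroup G)" using cA by simp
    have "(\<lambda>x\<in>carrier G. x) ` K = K" using KG by auto
    then have "(\<lambda>x\<in>carrier G. x) \<in> {\<theta> \<in> auto G. \<theta> ` K = K}" using G.id_in_auto by simp
    then show "{\<theta> \<in> auto G. \<theta> ` K = K} \<noteq> {}" by (metis empty_iff)
  next
    fix a assume a: "a \<in> {\<theta> \<in> auto G. \<theta> ` K = K}"
    then have aa: "a \<in> auto G" "a ` K = K" by auto
    have ia: "inv\<^bsub>AutoGroup G\<^esub> a \<in> auto G" using AG.inv_closed cA aa by auto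
    have e1: "inv\<^bsub>AutoGroup G\<^esub> a \<otimes>\<^bsub>AutoGroup G\<^esub> a = \<one>\<^bsub>AutoGroup G\<^esub>" using AG.l_inv cA aa by auto
    have e: "\<And>x. x \<in> carrier G \<Longrightarrow> (inv\<^bsub>AutoGroup G\<^esub> a) (a x) = x"
    proof -
      fix x assume x: "x \<in> carrier G"
      have "compose (carrier G) (inv\<^bsub>AutoGroup G\<^esub> a) a x = (\<lambda>x\<in>carrier G. x) x"
        using e1 mA[OF ia aa(1)] oA by simp
      then show "(inv\<^bsub>AutoGroup G\<^esub> a) (a x) = x" using x by (simp add: compose_def)
    qed
    have "(inv\<^bsub>AutoGroup G\<^esub> a) ` K = (inv\<^bsub>AutoGroup G\<^esub> a) ` (a ` K)" using aa by simp
    also have "\<dots> = (\<lambda>x. (inv\<^bsub>AutoGroup G\<^esub> a) (a x)) ` K" by (simp add: image_image)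
    also have "\<dots> = (\<lambda>x. x) ` K" using e KG by (intro image_cong) auto
    finally have "(inv\<^bsub>AutoGroup G\<^esub> a) ` K = K" by simp
    then show "inv\<^bsub>AutoGroup G\<^esub> a \<in> {\<theta> \<in> auto G. \<theta> ` K = K}" using ia by simp
  next
    fix a b assume "a \<in> {\<theta> \<in> auto G. \<theta> ` K = K}" "b \<in> {\<theta> \<in> auto G. \<theta> ` K = K}"
    then have ab: "a \<in> auto G" "a ` K = K" "b \<in> auto G" "b ` K = K" by auto
    have "compose (carrier G) a b ` K = (\<lambda>x. a (b x)) ` K" using KG by (intro image_cong) (auto simp: compose_def)
    also have "\<dots> = a ` (b ` K)" by (simp add: image_image)
    finally have "compose (carrier G) a b ` K = K" using ab by simp
    moreover have "a \<otimes>\<^bsub>AutoGroup G\<^esub> b \<in> auto G" using ab AG.m_closed cA by simp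
    ultimately show "a \<otimes>\<^bsub>AutoGroup G\<^esub> b \<in> {\<theta> \<in> auto G. \<theta> ` K = K}"
      using ab mA by simp
  qed
  show ?thesis unfolding AutK_group_def by (rule subgroup.subgroup_is_group[OF sub AG.is_group])
qed


lemma (in group) inv_cancel_l1 [simp]: "x \<in> carrier G \<Longrightarrow> y \<in> carrier G \<Longrightarrow> inv x \<otimes> (x \<otimes> y) = y"
  by (simp add: m_assoc[symmetric])
lemma (in group) inv_cancel_l2 [simp]: "x \<in> carrier G \<Longrightarrow> y \<in> carrier G \<Longrightarrow> x \<otimes> (inv x \<otimes> y) = y"
  by (simp add: m_assoc[symmetric])

locale sdp = group G for G (structure) +
  fixes H K
  assumes nH: "H \<lhd> G" and sK: "subgroup K G" and HK1: "H \<inter> K = {\<one>}" and HKG: "H <#> K = carrier G"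
begin

lemma sH: "subgroup H G" by (rule normal_imp_subgroup[OF nH])
lemma HG: "H \<subseteq> carrier G" by (rule subgroup.subset[OF sH])
lemma KG: "K \<subseteq> carrier G" by (rule subgroup.subset[OF sK])
lemma inHG: "h \<in> H \<Longrightarrow> h \<in> carrier G" by (rule subsetD[OF HG])
lemma inKG: "k \<in> K \<Longrightarrow> k \<in> carrier G" by (rule subsetD[OF KG])
lemma H_mult: "a \<in> H \<Longrightarrow> b \<in> H \<Longrightarrow> a \<otimes> b \<in> H" by (rule subgroup.m_closed[OF sH])
lemma K_mult: "a \<in> K \<Longrightarrow> b \<in> K \<Longrightarrow> a \<otimes> b \<in> K" by (rule subgroup.m_closed[OF sK])
lemma H_inv: "a \<in> H \<Longrightarrow> inv a \<in> H" by (rule subgroup.m_inv_closed[OF sH])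
lemma K_inv: "a \<in> K \<Longrightarrow> inv a \<in> K" by (rule subgroup.m_inv_closed[OF sK])
lemma H_one: "\<one> \<in> H" by (rule subgroup.one_closed[OF sH])
lemma K_one: "\<one> \<in> K" by (rule subgroup.one_closed[OF sK])
lemma H_conj: "h \<in> H \<Longrightarrow> g \<in> carrier G \<Longrightarrow> conjg G h g \<in> H"
  unfolding conjg_def by (rule normal.inv_op_closed2[OF nH])

lemma decomp_ex: "g \<in> carrier G \<Longrightarrow> \<exists>h\<in>H. \<exists>k\<in>K. g = h \<otimes> k"
proof -
  assume "g \<in> carrier G"
  then have "g \<in> H <#> K" using HKG by simp
  then show ?thesis unfolding set_mult_def by blast
qed

lemma decomp_uniq:
  assumes "h1 \<in> H" "k1 \<in> K" "h2 \<in> H" "k2 \<in> K" "h1 \<otimes> k1 = h2 \<otimes> k2"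
  shows "h1 = h2 \<and> k1 = k2"
proof -
  have c: "h1 \<in> carrier G" "k1 \<in> carrier G" "h2 \<in> carrier G" "k2 \<in> carrier G"
    using assms inHG inKG by auto
  have "inv h2 \<otimes> (h1 \<otimes> k1) \<otimes> inv k1 = inv h2 \<otimes> (h2 \<otimes> k2) \<otimes> inv k1" using assms(5) by simp
  then have e: "inv h2 \<otimes> h1 = k2 \<otimes> inv k1" using c by (simp add: m_assoc)
  have "inv h2 \<otimes> h1 \<in> H" using assms H_mult H_inv by blast
  moreover have "k2 \<otimes> inv k1 \<in> K" using assms K_mult K_inv by blast
  ultimately have "inv h2 \<otimes> h1 \<in> H \<inter> K" using e by simp
  then have e1: "inv h2 \<otimes> h1 = \<one>" using HK1 by simp
  have "h1 = h2 \<otimes> (inv h2 \<otimes> h1)" using c by simp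
  then have "h1 = h2" using e1 c by simp
  moreover have "k2 \<otimes> inv k1 = \<one>" using e e1 by simp
  then have "inv (inv k1) = k2" using c by (intro inv_equality) auto
  then have "k2 = k1" using c by simp
  ultimately show ?thesis by simp
qed

definition hp where "hp g = (THE h. h \<in> H \<and> (\<exists>k\<in>K. g = h \<otimes> k))"
definition kp where "kp g = inv (hp g) \<otimes> g"

lemma hp_eq: assumes "h \<in> H" "k \<in> K" shows "hp (h \<otimes> k) = h"
  unfolding hp_def
proof (rule the_equality)
  show "h \<in> H \<and> (\<exists>k'\<in>K. h \<otimes> k = h \<otimes> k')" using assms by blast
  fix h' assume "h' \<in> H \<and> (\<exists>k'\<in>K. h \<otimes> k = h' \<otimes> k')"
  then obtain k' where "h' \<in> H" "k' \<in> K" "h \<otimes> k = h' \<otimes> k'" by blast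
  then show "h' = h" using decomp_uniq[of h k h' k'] assms by simp
qed

lemma kp_eq: assumes "h \<in> H" "k \<in> K" shows "kp (h \<otimes> k) = k"
  unfolding kp_def hp_eq[OF assms] using assms inHG inKG by simp

lemma hp_in: assumes "g \<in> carrier G" shows "hp g \<in> H" "kp g \<in> K" "g = hp g \<otimes> kp g"
proof -
  obtain h k where hk: "h \<in> H" "k \<in> K" "g = h \<otimes> k" using decomp_ex assms by blast
  show "hp g \<in> H" "kp g \<in> K" "g = hp g \<otimes> kp g" using hk hp_eq kp_eq by auto
qed

end


context sdp begin

lemma conj_closed[simp]: "a \<in> carrier G \<Longrightarrow> b \<in> carrier G \<Longrightarrow> conjg G a b \<in> carrier G"
  unfolding conjg_def by simp

lemma alg1: "a \<in> carrier G \<Longrightarrow> b \<in> carrier G \<Longrightarrow> c \<in> carrier G \<Longrightarrow> d \<in> carrier G \<Longrightarrow>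
   a \<otimes> b \<otimes> (c \<otimes> d) = a \<otimes> conjg G c b \<otimes> (b \<otimes> d)"
  unfolding conjg_def by (simp add: m_assoc)

lemma alg2: "a \<in> carrier G \<Longrightarrow> b \<in> carrier G \<Longrightarrow> c \<in> carrier G \<Longrightarrow>
   conjg G (a \<otimes> b) c = conjg G a c \<otimes> conjg G b c"
  unfolding conjg_def by (simp add: m_assoc)

lemma decomp_eq: "x = a \<otimes> b \<Longrightarrow> a \<in> H \<Longrightarrow> b \<in> K \<Longrightarrow> hp x = a \<and> kp x = b"
  using hp_eq kp_eq by simp

lemma aut_facts:
  assumes "\<theta> \<in> auto G"
  shows "\<And>x. x \<in> carrier G \<Longrightarrow> \<theta> x \<in> carrier G"
    and "\<And>x y. x \<in> carrier G \<Longrightarrow> y \<in> carrier G \<Longrightarrow> \<theta> (x \<otimes> y) = \<theta> x \<otimes> \<theta> y"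
    and "inj_on \<theta> (carrier G)" and "\<theta> ` carrier G = carrier G" and "\<theta> \<in> extensional (carrier G)"
    and "\<theta> \<one> = \<one>"
    and "\<And>x. x \<in> carrier G \<Longrightarrow> \<theta> (inv x) = inv (\<theta> x)"
proof -
  have hm: "\<theta> \<in> hom G G" and bj: "\<theta> \<in> Bij (carrier G)" using assms by (auto simp: auto_def)
  interpret gh: group_hom G G \<theta> using hm by (simp add: group_hom_def group_hom_axioms_def group_axioms)
  show "\<And>x. x \<in> carrier G \<Longrightarrow> \<theta> x \<in> carrier G" by simp
  show "\<And>x y. x \<in> carrier G \<Longrightarrow> y \<in> carrier G \<Longrightarrow> \<theta> (x \<otimes> y) = \<theta> x \<otimes> \<theta> y" by simp
  show "inj_on \<theta> (carrier G)" "\<theta> ` carrier G = carrier G" "\<theta> \<in> extensional (carrier G)"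
    using bj by (auto simp: Bij_def bij_betw_def)
  show "\<theta> \<one> = \<one>" by simp
  show "\<And>x. x \<in> carrier G \<Longrightarrow> \<theta> (inv x) = inv (\<theta> x)" by simp
qed

definition al where "al \<theta> = (\<lambda>h\<in>H. hp (\<theta> h))"
definition ga where "ga \<theta> = (\<lambda>h\<in>H. kp (\<theta> h))"
definition Phi where "Phi \<theta> = (al \<theta>, ga \<theta>, restrict \<theta> K)"

lemma thK: assumes "\<theta> ` K = K" "k \<in> K" shows "\<theta> k \<in> K"
proof -
  have "\<theta> k \<in> \<theta> ` K" using assms(2) by (rule imageI)
  then show ?thesis using assms(1) by simp
qed

lemma thH: assumes "\<theta> \<in> auto G" "h \<in> H"
  shows "\<theta> h = al \<theta> h \<otimes> ga \<theta> h" "al \<theta> h \<in> H" "ga \<theta> h \<in> K"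
proof -
  have "\<theta> h \<in> carrier G" using aut_facts(1)[OF assms(1)] inHG[OF assms(2)] by simp
  then show "\<theta> h = al \<theta> h \<otimes> ga \<theta> h" "al \<theta> h \<in> H" "ga \<theta> h \<in> K"
    using hp_in assms(2) by (auto simp: al_def ga_def)
qed

end


context sdp begin

lemma C1_both:
  assumes th: "\<theta> \<in> auto G" and h: "h \<in> H" "h' \<in> H"
  shows "al \<theta> (h \<otimes> h') = al \<theta> h \<otimes> conjg G (al \<theta> h') (ga \<theta> h) \<and> ga \<theta> (h \<otimes> h') = ga \<theta> h \<otimes> ga \<theta> h'"
proof -
  note f = thH[OF th h(1)] thH[OF th h(2)]
  have c: "al \<theta> h \<in> carrier G" "ga \<theta> h \<in> carrier G" "al \<theta> h' \<in> carrier G" "ga \<theta> h' \<in> carrier G"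
    using f inHG inKG by auto
  have hh: "h \<otimes> h' \<in> H" using H_mult h by simp
  have "\<theta> (h \<otimes> h') = \<theta> h \<otimes> \<theta> h'" using aut_facts(2)[OF th] inHG h by simp
  also have "\<dots> = al \<theta> h \<otimes> ga \<theta> h \<otimes> (al \<theta> h' \<otimes> ga \<theta> h')" using f by simp
  also have "\<dots> = al \<theta> h \<otimes> conjg G (al \<theta> h') (ga \<theta> h) \<otimes> (ga \<theta> h \<otimes> ga \<theta> h')"
    using c by (rule alg1)
  finally have e: "\<theta> (h \<otimes> h') = al \<theta> h \<otimes> conjg G (al \<theta> h') (ga \<theta> h) \<otimes> (ga \<theta> h \<otimes> ga \<theta> h')" .
  have m1: "al \<theta> h \<otimes> conjg G (al \<theta> h') (ga \<theta> h) \<in> H" using f c H_conj H_mult by simp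
  have m2: "ga \<theta> h \<otimes> ga \<theta> h' \<in> K" using f K_mult by simp
  from decomp_eq[OF e m1 m2] show ?thesis using hh by (simp add: al_def ga_def)
qed

lemma K_conj: "a \<in> K \<Longrightarrow> b \<in> K \<Longrightarrow> conjg G a b \<in> K"
  unfolding conjg_def using K_mult K_inv by simp

lemma C23_both:
  assumes th: "\<theta> \<in> auto G" "\<theta> ` K = K" and h: "h \<in> H" and k: "k \<in> K"
  shows "al \<theta> (conjg G h k) = conjg G (al \<theta> h) (\<theta> k) \<and> ga \<theta> (conjg G h k) = conjg G (ga \<theta> h) (\<theta> k)"
proof -
  note f = thH[OF th(1) h]
  have tk: "\<theta> k \<in> K" using thK[OF th(2) k] .
  have c: "al \<theta> h \<in> carrier G" "ga \<theta> h \<in> carrier G" "\<theta> k \<in> carrier G" "h \<in> carrier G" "k \<in> carrier G"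
    using f inHG inKG tk h k by auto
  have hk: "conjg G h k \<in> H" using H_conj h c by simp
  have "\<theta> (conjg G h k) = conjg G (\<theta> h) (\<theta> k)"
    unfolding conjg_def using c aut_facts[OF th(1)] by simp
  also have "\<dots> = conjg G (al \<theta> h) (\<theta> k) \<otimes> conjg G (ga \<theta> h) (\<theta> k)"
    using f(1) c alg2 by simp
  finally have e: "\<theta> (conjg G h k) = conjg G (al \<theta> h) (\<theta> k) \<otimes> conjg G (ga \<theta> h) (\<theta> k)" .
  have m1: "conjg G (al \<theta> h) (\<theta> k) \<in> H" using H_conj f c by simp
  have m2: "conjg G (ga \<theta> h) (\<theta> k) \<in> K" using K_conj f tk by simp
  from decomp_eq[OF e m1 m2] show ?thesis using hk by (simp add: al_def ga_def)
qed

lemma th_prod: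
  assumes th: "\<theta> \<in> auto G" and h: "h \<in> H" and k: "k \<in> K"
  shows "\<theta> (h \<otimes> k) = al \<theta> h \<otimes> (ga \<theta> h \<otimes> \<theta> k)"
proof -
  note f = thH[OF th h]
  have "\<theta> (h \<otimes> k) = \<theta> h \<otimes> \<theta> k" using aut_facts(2)[OF th] inHG inKG h k by simp
  also have "\<dots> = al \<theta> h \<otimes> (ga \<theta> h \<otimes> \<theta> k)"
    using f inHG inKG aut_facts(1)[OF th] k by (simp add: m_assoc)
  finally show ?thesis .
qed

lemma Phi_MK:
  assumes th: "\<theta> \<in> auto G" "\<theta> ` K = K"
  shows "Phi \<theta> \<in> MK G H K"
proof -
  note f = thH[OF th(1)]
  have P1: "al \<theta> \<in> H \<rightarrow>\<^sub>E H" unfolding al_def using f(2) by (simp add: al_def)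
  have P2: "ga \<theta> \<in> hom (G\<lparr>carrier := H\<rparr>) (G\<lparr>carrier := K\<rparr>)"
    unfolding hom_def using f(3) C1_both[OF th(1)] by auto
  have P3: "ga \<theta> \<in> extensional H" by (simp add: ga_def)
  have inj: "inj_on \<theta> K" using aut_facts(3)[OF th(1)] KG by (rule inj_on_subset)
  have P4: "restrict \<theta> K \<in> auto (G\<lparr>carrier := K\<rparr>)"
    unfolding auto_def hom_def Bij_def bij_betw_def
    using thK[OF th(2)] K_mult aut_facts(2)[OF th(1)] inKG inj th(2) by auto
  have P5: "\<forall>h\<in>H. \<forall>h'\<in>H. al \<theta> (h \<otimes> h') = al \<theta> h \<otimes> conjg G (al \<theta> h') (ga \<theta> h)"
    using C1_both[OF th(1)] by simp
  have P6: "\<forall>h\<in>H. \<forall>k\<in>K. ga \<theta> (conjg G h k) = conjg G (ga \<theta> h) (restrict \<theta> K k)"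
    using C23_both[OF th] by simp
  have P7: "\<forall>h\<in>H. \<forall>k\<in>K. al \<theta> (conjg G h k) = conjg G (al \<theta> h) (restrict \<theta> K k)"
    using C23_both[OF th] by simp
  have P8: "\<forall>h'\<in>H. \<forall>k'\<in>K. \<exists>!p. p \<in> H \<times> K \<and> al \<theta> (fst p) = h' \<and>
                                  ga \<theta> (fst p) \<otimes> restrict \<theta> K (snd p) = k'"
  proof (intro ballI)
    fix h' k' assume hk': "h' \<in> H" "k' \<in> K"
    have g: "h' \<otimes> k' \<in> carrier G" using hk' inHG inKG by simp
    then have "h' \<otimes> k' \<in> \<theta> ` carrier G" using aut_facts(4)[OF th(1)] by simp
    then obtain x where x: "x \<in> carrier G" "\<theta> x = h' \<otimes> k'" by auto
    note d = hp_in[OF x(1)]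
    have "h' \<otimes> k' = al \<theta> (hp x) \<otimes> (ga \<theta> (hp x) \<otimes> \<theta> (kp x))"
      using x(2) d th_prod[OF th(1) d(1) d(2)] by simp
    moreover have "ga \<theta> (hp x) \<otimes> \<theta> (kp x) \<in> K" using f(3)[OF d(1)] thK[OF th(2) d(2)] K_mult by simp
    ultimately have e: "al \<theta> (hp x) = h' \<and> ga \<theta> (hp x) \<otimes> \<theta> (kp x) = k'"
      using decomp_uniq[of h' k'] hk' f(2)[OF d(1)] by metis
    show "\<exists>!p. p \<in> H \<times> K \<and> al \<theta> (fst p) = h' \<and> ga \<theta> (fst p) \<otimes> restrict \<theta> K (snd p) = k'"
    proof (rule ex1I[where a="(hp x, kp x)"])
      show "(hp x, kp x) \<in> H \<times> K \<and> al \<theta> (fst (hp x, kp x)) = h' \<and> ga \<theta> (fst (hp x, kp x)) \<otimes> restrict \<theta> K (snd (hp x, kp x)) = k'"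
        using d e by simp
    next
      fix p assume p: "p \<in> H \<times> K \<and> al \<theta> (fst p) = h' \<and> ga \<theta> (fst p) \<otimes> restrict \<theta> K (snd p) = k'"
      then have p1: "fst p \<in> H" "snd p \<in> K" by auto
      have "\<theta> (fst p \<otimes> snd p) = h' \<otimes> k'" using th_prod[OF th(1) p1] p p1 by simp
      then have "\<theta> (fst p \<otimes> snd p) = \<theta> x" using x by simp
      moreover have "fst p \<otimes> snd p \<in> carrier G" using p1 inHG inKG by simp
      ultimately have "fst p \<otimes> snd p = x" using inj_onD[OF aut_facts(3)[OF th(1)]] x(1) by blast
      then have "fst p \<otimes> snd p = hp x \<otimes> kp x" using d by simp
      then have "fst p = hp x \<and> snd p = kp x" using decomp_uniq p1 d by blast
      then show "p = (hp x, kp x)" by (simp add: prod_eq_iff)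
    qed
  qed
  show ?thesis unfolding MK_def Phi_def using P1 P2 P3 P4 P5 P6 P7 P8 by simp
qed

end


context sdp begin

lemma AutK_carrier: "carrier (AutK_group G K) = {\<theta> \<in> auto G. \<theta> ` K = K}"
  by (simp add: AutK_group_def)

lemma AutK_mult: "\<theta> \<in> auto G \<Longrightarrow> \<theta>' \<in> auto G \<Longrightarrow> \<theta> \<otimes>\<^bsub>AutK_group G K\<^esub> \<theta>' = compose (carrier G) \<theta> \<theta>'"
  by (simp add: AutK_group_def AutoGroup_def BijGroup_def auto_def)

lemma AutK_one: "\<one>\<^bsub>AutK_group G K\<^esub> = (\<lambda>x\<in>carrier G. x)"
  by (simp add: AutK_group_def AutoGroup_def BijGroup_def)

lemma Phi_mult:
  assumes th: "\<theta> \<in> auto G" "\<theta> ` K = K" and th': "\<theta>' \<in> auto G" "\<theta>' ` K = K"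
  shows "Phi (compose (carrier G) \<theta> \<theta>') = MK_mult G H K (Phi \<theta>) (Phi \<theta>')"
proof -
  have A: "\<And>h. h \<in> H \<Longrightarrow> \<theta> (\<theta>' h) = al \<theta> (al \<theta>' h) \<otimes> (ga \<theta> (al \<theta>' h) \<otimes> \<theta> (ga \<theta>' h))"
  proof -
    fix h assume h: "h \<in> H"
    note f' = thH[OF th'(1) h]
    show "\<theta> (\<theta>' h) = al \<theta> (al \<theta>' h) \<otimes> (ga \<theta> (al \<theta>' h) \<otimes> \<theta> (ga \<theta>' h))"
      using f' th_prod[OF th(1) f'(2) f'(3)] by simp
  qed
  have B: "\<And>h. h \<in> H \<Longrightarrow> ga \<theta> (al \<theta>' h) \<otimes> \<theta> (ga \<theta>' h) \<in> K"
    using thH(2,3)[OF th'(1)] thH(3)[OF th(1)] thK[OF th(2)] K_mult by simp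
  have D: "\<And>h. h \<in> H \<Longrightarrow> hp (\<theta> (\<theta>' h)) = al \<theta> (al \<theta>' h) \<and> kp (\<theta> (\<theta>' h)) = ga \<theta> (al \<theta>' h) \<otimes> \<theta> (ga \<theta>' h)"
    using decomp_eq[OF A] B thH(2)[OF th(1)] thH(2)[OF th'(1)] by simp
  have e1: "al (compose (carrier G) \<theta> \<theta>') = compose H (al \<theta>) (al \<theta>')"
  proof
    fix h show "al (compose (carrier G) \<theta> \<theta>') h = compose H (al \<theta>) (al \<theta>') h"
      using D[of h] inHG[of h] by (cases "h \<in> H") (simp_all add: al_def compose_def)
  qed
  have e2: "ga (compose (carrier G) \<theta> \<theta>') = (\<lambda>h\<in>H. ga \<theta> (al \<theta>' h) \<otimes> restrict \<theta> K (ga \<theta>' h))"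
  proof
    fix h show "ga (compose (carrier G) \<theta> \<theta>') h = (\<lambda>h\<in>H. ga \<theta> (al \<theta>' h) \<otimes> restrict \<theta> K (ga \<theta>' h)) h"
      using D[of h] inHG[of h] thH(3)[OF th'(1), of h] by (cases "h \<in> H") (simp_all add: ga_def compose_def)
  qed
  have e3: "restrict (compose (carrier G) \<theta> \<theta>') K = compose K (restrict \<theta> K) (restrict \<theta>' K)"
  proof
    fix k show "restrict (compose (carrier G) \<theta> \<theta>') K k = compose K (restrict \<theta> K) (restrict \<theta>' K) k"
      using thK[OF th'(2), of k] inKG[of k] by (cases "k \<in> K") (simp_all add: compose_def)
  qed
  show ?thesis unfolding MK_mult_def Phi_def using e1 e2 e3 by simp
qed

lemma Phi_inj:
  assumes th: "\<theta> \<in> auto G" and th': "\<theta>' \<in> auto G" and e: "Phi \<theta> = Phi \<theta>'"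
  shows "\<theta> = \<theta>'"
proof
  fix x
  have ea: "al \<theta> = al \<theta>'" "ga \<theta> = ga \<theta>'" "restrict \<theta> K = restrict \<theta>' K" using e by (simp_all add: Phi_def)
  show "\<theta> x = \<theta>' x"
  proof (cases "x \<in> carrier G")
    case True
    note d = hp_in[OF True]
    have "\<theta> x = al \<theta> (hp x) \<otimes> (ga \<theta> (hp x) \<otimes> restrict \<theta> K (kp x))"
      using th_prod[OF th d(1) d(2)] d by simp
    also have "\<dots> = al \<theta>' (hp x) \<otimes> (ga \<theta>' (hp x) \<otimes> restrict \<theta>' K (kp x))" using ea by simp
    also have "\<dots> = \<theta>' x" using th_prod[OF th' d(1) d(2)] d by simp
    finally show ?thesis .
  next
    case False
    then show ?thesis using aut_facts(5)[OF th] aut_facts(5)[OF th'] by (simp add: extensional_def)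
  qed
qed

lemma Phi_one: "Phi (\<lambda>x\<in>carrier G. x) = MK_one G H K"
proof -
  have d: "\<And>h. h \<in> H \<Longrightarrow> hp h = h \<and> kp h = \<one>"
  proof -
    fix h assume h: "h \<in> H"
    show "hp h = h \<and> kp h = \<one>" using decomp_eq[of h h \<one>] K_one inHG[OF h] h by simp
  qed
  have e1: "al (\<lambda>x\<in>carrier G. x) = (\<lambda>h\<in>H. h)"
  proof
    fix h show "al (\<lambda>x\<in>carrier G. x) h = (\<lambda>h\<in>H. h) h" using d[of h] inHG[of h] by (simp add: al_def)
  qed
  have e2: "ga (\<lambda>x\<in>carrier G. x) = (\<lambda>h\<in>H. \<one>)"
  proof
    fix h show "ga (\<lambda>x\<in>carrier G. x) h = (\<lambda>h\<in>H. \<one>) h" using d[of h] inHG[of h] by (simp add: ga_def)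
  qed
  have e3: "restrict (\<lambda>x\<in>carrier G. x) K = (\<lambda>k\<in>K. k)"
  proof
    fix k show "restrict (\<lambda>x\<in>carrier G. x) K k = (\<lambda>k\<in>K. k) k" using inKG[of k] by simp
  qed
  show ?thesis unfolding Phi_def MK_one_def using e1 e2 e3 by simp
qed

end


context sdp begin

lemma idem_one: "x \<in> carrier G \<Longrightarrow> x \<otimes> x = x \<Longrightarrow> x = \<one>"
proof -
  assume x: "x \<in> carrier G" "x \<otimes> x = x"
  have "x = inv x \<otimes> (x \<otimes> x)" using x(1) by simp
  also have "\<dots> = \<one>" using x by simp
  finally show "x = \<one>" .
qed

definition Psi where "Psi \<alpha> \<gamma> \<delta> = (\<lambda>g\<in>carrier G. \<alpha> (hp g) \<otimes> \<gamma> (hp g) \<otimes> \<delta> (kp g))"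

lemma conjg_one: "x \<in> carrier G \<Longrightarrow> conjg G x \<one> = x" by (simp add: conjg_def)

lemma Psi_props:
  assumes M: "(\<alpha>, \<gamma>, \<delta>) \<in> MK G H K"
  shows "Psi \<alpha> \<gamma> \<delta> \<in> auto G" "Psi \<alpha> \<gamma> \<delta> ` K = K" "Phi (Psi \<alpha> \<gamma> \<delta>) = (\<alpha>, \<gamma>, \<delta>)"
proof -
  have mk: "\<alpha> \<in> H \<rightarrow>\<^sub>E H" "\<gamma> \<in> hom (G\<lparr>carrier := H\<rparr>) (G\<lparr>carrier := K\<rparr>)" "\<gamma> \<in> extensional H"
     "\<delta> \<in> auto (G\<lparr>carrier := K\<rparr>)"
     "\<forall>h\<in>H. \<forall>h'\<in>H. \<alpha> (h \<otimes> h') = \<alpha> h \<otimes> conjg G (\<alpha> h') (\<gamma> h)"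
     "\<forall>h\<in>H. \<forall>k\<in>K. \<gamma> (conjg G h k) = conjg G (\<gamma> h) (\<delta> k)"
     "\<forall>h\<in>H. \<forall>k\<in>K. \<alpha> (conjg G h k) = conjg G (\<alpha> h) (\<delta> k)"
     "\<forall>h'\<in>H. \<forall>k'\<in>K. \<exists>!p. p \<in> H \<times> K \<and> \<alpha> (fst p) = h' \<and> \<gamma> (fst p) \<otimes> \<delta> (snd p) = k'"
    using M by (simp_all add: MK_def)
  have aH: "\<And>h. h \<in> H \<Longrightarrow> \<alpha> h \<in> H" using mk(1) by (auto simp: PiE_def Pi_def)
  have aE: "\<alpha> \<in> extensional H" using mk(1) by (auto simp: PiE_def)
  have gK: "\<And>h. h \<in> H \<Longrightarrow> \<gamma> h \<in> K" using mk(2) by (auto simp: hom_def Pi_def)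
  have gm: "\<And>h h'. h \<in> H \<Longrightarrow> h' \<in> H \<Longrightarrow> \<gamma> (h \<otimes> h') = \<gamma> h \<otimes> \<gamma> h'" using mk(2) by (auto simp: hom_def)
  have dK: "\<And>k. k \<in> K \<Longrightarrow> \<delta> k \<in> K" using mk(4) by (auto simp: auto_def hom_def Pi_def)
  have dm: "\<And>k k'. k \<in> K \<Longrightarrow> k' \<in> K \<Longrightarrow> \<delta> (k \<otimes> k') = \<delta> k \<otimes> \<delta> k'" using mk(4) by (auto simp: auto_def hom_def)
  have dE: "\<delta> \<in> extensional K" and dB: "bij_betw \<delta> K K" using mk(4) by (auto simp: auto_def Bij_def)
  have dI: "\<delta> ` K = K" using dB by (simp add: bij_betw_def)
  have g1: "\<gamma> \<one> = \<one>"
    using idem_one[of "\<gamma> \<one>"] gm[of \<one> \<one>] gK[OF H_one] inKG H_one by simp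
  have d1: "\<delta> \<one> = \<one>"
    using idem_one[of "\<delta> \<one>"] dm[of \<one> \<one>] dK[OF K_one] inKG K_one by simp
  have a1: "\<alpha> \<one> = \<one>"
  proof -
    have "\<alpha> \<one> = \<alpha> \<one> \<otimes> \<alpha> \<one>" using mk(5) H_one g1 conjg_one[of "\<alpha> \<one>"] aH[OF H_one] inHG by force
    then show ?thesis using idem_one[of "\<alpha> \<one>"] aH[OF H_one] inHG by simp
  qed
  have aG: "\<And>h. h \<in> H \<Longrightarrow> \<alpha> h \<in> carrier G" using aH inHG by simp
  have gG: "\<And>h. h \<in> H \<Longrightarrow> \<gamma> h \<in> carrier G" using gK inKG by simp
  have dG: "\<And>k. k \<in> K \<Longrightarrow> \<delta> k \<in> carrier G" using dK inKG by simp
  let ?P = "Psi \<alpha> \<gamma> \<delta>"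
  have Pv: "\<And>h k. h \<in> H \<Longrightarrow> k \<in> K \<Longrightarrow> ?P (h \<otimes> k) = \<alpha> h \<otimes> \<gamma> h \<otimes> \<delta> k"
    using hp_eq kp_eq inHG inKG by (simp add: Psi_def)
  have PG: "\<And>g. g \<in> carrier G \<Longrightarrow> ?P g \<in> carrier G"
    using hp_in aG gG dG by (simp add: Psi_def)
  
  have Pm: "\<And>x y. x \<in> carrier G \<Longrightarrow> y \<in> carrier G \<Longrightarrow> ?P (x \<otimes> y) = ?P x \<otimes> ?P y"
  proof -
    fix x y assume xy: "x \<in> carrier G" "y \<in> carrier G"
    obtain h k h' k' where hk: "h \<in> H" "k \<in> K" "h' \<in> H" "k' \<in> K" "x = h \<otimes> k" "y = h' \<otimes> k'"
      using hp_in[OF xy(1)] hp_in[OF xy(2)] by metis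
    have c: "h \<in> carrier G" "k \<in> carrier G" "h' \<in> carrier G" "k' \<in> carrier G" using hk inHG inKG by auto
    have cj: "conjg G h' k \<in> H" using H_conj hk c by simp
    have xy2: "x \<otimes> y = h \<otimes> conjg G h' k \<otimes> (k \<otimes> k')" using hk alg1[OF c] by simp
    have m1: "h \<otimes> conjg G h' k \<in> H" using H_mult hk cj by simp
    have m2: "k \<otimes> k' \<in> K" using K_mult hk by simp
    have "?P (x \<otimes> y) = \<alpha> (h \<otimes> conjg G h' k) \<otimes> \<gamma> (h \<otimes> conjg G h' k) \<otimes> \<delta> (k \<otimes> k')"
      using Pv[OF m1 m2] xy2 by simp
    also have "\<dots> = \<alpha> h \<otimes> conjg G (conjg G (\<alpha> h') (\<delta> k)) (\<gamma> h) \<otimes> (\<gamma> h \<otimes> conjg G (\<gamma> h') (\<delta> k)) \<otimes> (\<delta> k \<otimes> \<delta> k')"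
      using mk(5,6,7) hk cj gm dm by simp
    also have "\<dots> = \<alpha> h \<otimes> \<gamma> h \<otimes> \<delta> k \<otimes> (\<alpha> h' \<otimes> \<gamma> h' \<otimes> \<delta> k')"
      unfolding conjg_def using aG gG dG hk by (simp add: m_assoc)
    also have "\<dots> = ?P x \<otimes> ?P y" using Pv hk by simp
    finally show "?P (x \<otimes> y) = ?P x \<otimes> ?P y" .
  qed
  have Pinj: "inj_on ?P (carrier G)"
  proof (rule inj_onI)
    fix x y assume xy: "x \<in> carrier G" "y \<in> carrier G" "?P x = ?P y"
    note dx = hp_in[OF xy(1)] and dy = hp_in[OF xy(2)]
    have "\<alpha> (hp x) \<otimes> (\<gamma> (hp x) \<otimes> \<delta> (kp x)) = \<alpha> (hp y) \<otimes> (\<gamma> (hp y) \<otimes> \<delta> (kp y))"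
      using xy(3) xy(1,2) dx dy aG gG dG by (simp add: Psi_def m_assoc)
    moreover have k1: "\<gamma> (hp x) \<otimes> \<delta> (kp x) \<in> K" using K_mult gK dK dx by simp
    moreover have k2: "\<gamma> (hp y) \<otimes> \<delta> (kp y) \<in> K" using K_mult gK dK dy by simp
    ultimately have e: "\<alpha> (hp x) = \<alpha> (hp y) \<and> \<gamma> (hp x) \<otimes> \<delta> (kp x) = \<gamma> (hp y) \<otimes> \<delta> (kp y)"
      using decomp_uniq[OF aH[OF dx(1)] _ aH[OF dy(1)]] by simp
    define Q where "Q = (\<lambda>p. p \<in> H \<times> K \<and> \<alpha> (fst p) = \<alpha> (hp x) \<and> \<gamma> (fst p) \<otimes> \<delta> (snd p) = \<gamma> (hp x) \<otimes> \<delta> (kp x))"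
    have u: "\<exists>!p. Q p"
      unfolding Q_def using mk(8) aH gK dK K_mult dx by simp
    have q1: "Q (hp x, kp x)" unfolding Q_def using dx by simp
    have q2: "Q (hp y, kp y)" unfolding Q_def using dy e by simp
    have "(hp x, kp x) = (hp y, kp y)"
    proof (rule ex1E[OF u])
      fix p assume a: "Q p" "\<forall>y. Q y \<longrightarrow> y = p"
      have "(hp x, kp x) = p" using a(2) q1 by blast
      moreover have "(hp y, kp y) = p" using a(2) q2 by blast
      ultimately show ?thesis by simp
    qed
    then show "x = y" using dx(3) dy(3) by simp
  qed
  have Psurj: "?P ` carrier G = carrier G"
  proof
    show "?P ` carrier G \<subseteq> carrier G" using PG by auto
  next
    show "carrier G \<subseteq> ?P ` carrier G"
    proof
      fix g assume g: "g \<in> carrier G"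
      note d = hp_in[OF g]
      obtain p where p: "p \<in> H \<times> K" "\<alpha> (fst p) = hp g" "\<gamma> (fst p) \<otimes> \<delta> (snd p) = kp g"
        using mk(8) d by metis
      have p1: "fst p \<in> H" "snd p \<in> K" using p(1) by auto
      have "?P (fst p \<otimes> snd p) = \<alpha> (fst p) \<otimes> (\<gamma> (fst p) \<otimes> \<delta> (snd p))"
        using Pv[OF p1] aG gG dG p1 by (simp add: m_assoc)
      also have "\<dots> = g" using p d by simp
      finally have "g = ?P (fst p \<otimes> snd p)" by simp
      moreover have "fst p \<otimes> snd p \<in> carrier G" using p1 inHG inKG by simp
      ultimately show "g \<in> ?P ` carrier G" by (rule image_eqI)
    qed
  qed
  show "?P \<in> auto G"
    unfolding auto_def hom_def Bij_def bij_betw_def using PG Pm Pinj Psurj by (simp add: Psi_def)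
  have PK: "\<And>k. k \<in> K \<Longrightarrow> ?P k = \<delta> k"
  proof -
    fix k assume k: "k \<in> K"
    have "?P (\<one> \<otimes> k) = \<alpha> \<one> \<otimes> \<gamma> \<one> \<otimes> \<delta> k" using Pv[OF H_one k] .
    then show "?P k = \<delta> k" using k inKG a1 g1 dG by simp
  qed
  have PH: "\<And>h. h \<in> H \<Longrightarrow> ?P h = \<alpha> h \<otimes> \<gamma> h"
  proof -
    fix h assume h: "h \<in> H"
    have "?P (h \<otimes> \<one>) = \<alpha> h \<otimes> \<gamma> h \<otimes> \<delta> \<one>" using Pv[OF h K_one] .
    then show "?P h = \<alpha> h \<otimes> \<gamma> h" using h inHG d1 aG gG by simp
  qed
  have "?P ` K = \<delta> ` K" using PK by (rule image_cong[OF refl])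
  then show "?P ` K = K" using dI by simp
  have e1: "al ?P = \<alpha>"
  proof
    fix h show "al ?P h = \<alpha> h"
    proof (cases "h \<in> H")
      case True then show ?thesis using decomp_eq[OF PH[OF True] aH[OF True] gK[OF True]] by (simp add: al_def)
    next
      case False then show ?thesis using aE by (simp add: al_def extensional_def)
    qed
  qed
  have e2: "ga ?P = \<gamma>"
  proof
    fix h show "ga ?P h = \<gamma> h"
    proof (cases "h \<in> H")
      case True then show ?thesis using decomp_eq[OF PH[OF True] aH[OF True] gK[OF True]] by (simp add: ga_def)
    next
      case False then show ?thesis using mk(3) by (simp add: ga_def extensional_def)
    qed
  qed
  have e3: "restrict ?P K = \<delta>"
  proof
    fix k show "restrict ?P K k = \<delta> k"
      using PK dE by (cases "k \<in> K") (simp_all add: extensional_def)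
  qed
  show "Phi ?P = (\<alpha>, \<gamma>, \<delta>)" unfolding Phi_def using e1 e2 e3 by simp
qed

end


theorem mainTheorem1:
  fixes G :: "('a, 'b) monoid_scheme" and H K :: "'a set"
  assumes "group G"
    and "H \<lhd> G"
    and "subgroup K G"
    and "H \<inter> K = {\<one>\<^bsub>G\<^esub>}"
    and "H <#>\<^bsub>G\<^esub> K = carrier G"
  shows "group (MK_group G H K) \<and>
         (\<exists>\<Phi>. \<Phi> \<in> iso (AutK_group G K) (MK_group G H K) \<and>
             (\<forall>\<theta> \<in> carrier (AutK_group G K). \<forall>\<alpha> \<gamma> \<delta>. \<Phi> \<theta> = (\<alpha>, \<gamma>, \<delta>) \<longrightarrow>
                 (\<forall>h\<in>H. \<theta> h = \<alpha> h \<otimes>\<^bsub>G\<^esub> \<gamma> h) \<and> \<delta> = restrict \<theta> K))"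
proof -
  have Sd: "sdp G H K" using assms by (simp add: sdp_def sdp_axioms_def)
  interpret S: sdp G H K by (rule Sd)
  have cM: "carrier (MK_group G H K) = MK G H K" by (simp add: MK_group_def)
  have mM: "\<And>P Q. P \<otimes>\<^bsub>MK_group G H K\<^esub> Q = MK_mult G H K P Q" by (simp add: MK_group_def)
  have oM: "\<one>\<^bsub>MK_group G H K\<^esub> = MK_one G H K" by (simp add: MK_group_def)
  have hom: "S.Phi \<in> hom (AutK_group G K) (MK_group G H K)"
    unfolding hom_def using S.AutK_carrier cM mM S.AutK_mult S.Phi_MK S.Phi_mult by auto
  have inj: "inj_on S.Phi (carrier (AutK_group G K))"
    using S.AutK_carrier S.Phi_inj by (auto intro!: inj_onI)
  have surj: "S.Phi ` carrier (AutK_group G K) = carrier (MK_group G H K)"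
  proof
    show "S.Phi ` carrier (AutK_group G K) \<subseteq> carrier (MK_group G H K)"
      using S.AutK_carrier cM S.Phi_MK by auto
  next
    show "carrier (MK_group G H K) \<subseteq> S.Phi ` carrier (AutK_group G K)"
    proof
      fix M assume "M \<in> carrier (MK_group G H K)"
      then have M: "M \<in> MK G H K" using cM by simp
      obtain \<alpha> \<gamma> \<delta> where e: "M = (\<alpha>, \<gamma>, \<delta>)" by (cases M) auto
      note p = S.Psi_props[OF M[unfolded e]]
      have "S.Psi \<alpha> \<gamma> \<delta> \<in> carrier (AutK_group G K)" using p(1,2) S.AutK_carrier by simp
      then show "M \<in> S.Phi ` carrier (AutK_group G K)" using p(3) e by (metis image_eqI)
    qed
  qed
  have iso: "S.Phi \<in> iso (AutK_group G K) (MK_group G H K)"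
    unfolding iso_def bij_betw_def using hom inj surj by simp
  have grp: "group (MK_group G H K)"
    using group_transfer[OF AutK_group_is_group[OF assms(1,3)] hom surj] S.AutK_one S.Phi_one oM by simp
  have prp: "\<forall>\<theta> \<in> carrier (AutK_group G K). \<forall>\<alpha> \<gamma> \<delta>. S.Phi \<theta> = (\<alpha>, \<gamma>, \<delta>) \<longrightarrow>
                 (\<forall>h\<in>H. \<theta> h = \<alpha> h \<otimes>\<^bsub>G\<^esub> \<gamma> h) \<and> \<delta> = restrict \<theta> K"
  proof (intro ballI allI impI)
    fix \<theta> \<alpha> \<gamma> \<delta> assume th: "\<theta> \<in> carrier (AutK_group G K)" and e: "S.Phi \<theta> = (\<alpha>, \<gamma>, \<delta>)"
    have a: "\<theta> \<in> auto G" using th S.AutK_carrier by simp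
    have ee: "S.al \<theta> = \<alpha>" "S.ga \<theta> = \<gamma>" "restrict \<theta> K = \<delta>" using e by (simp_all add: S.Phi_def)
    show "(\<forall>h\<in>H. \<theta> h = \<alpha> h \<otimes>\<^bsub>G\<^esub> \<gamma> h) \<and> \<delta> = restrict \<theta> K"
      using S.thH(1)[OF a] ee by simp
  qed
  show ?thesis using grp iso prp by blast
qed

end
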